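(* Let $f,g,h\in{\rm elh}(\mathbb{C})$. If $f\circ g=f\circ h$ and $g\not\equiv h$, then there exists an entire function $t(z)$ such that $g(z)=h(z)+e^{t(z)}$ for all $z\in\mathbb{C}$.
   Context: ${\rm elh}(\mathbb{C})$ denotes the set of entire functions with nowhere vanishing derivative and derivative $1$ at $0$. *)

theory Defs
  imports "HOL-Complex_Analysis.Complex_Analysis"
begin

definition elh :: "(complex \<Rightarrow> complex) set" where
  "elh = {f. f holomorphic_on UNIV \<and> (\<forall>z. deriv f z \<noteq> 0) \<and> deriv f 0 = 1}"

end

theory Submission
  imports Defs
begin

theorem proposition3p13:
  assumes "f \<in> elh" and "g \<in> elh" and "h \<in> elh"
    and "f \<circ> g = f \<circ> h" and "g \<noteq> h"
  shows "\<exists>t. t holomorphic_on UNIV \<and> (\<forall>z. g z = h z + exp (t z))"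
proof -
  have hf: "f holomorphic_on UNIV" "\<And>z. deriv f z \<noteq> 0" using assms(1) by (auto simp: elh_def)
  have hg: "g holomorphic_on UNIV" using assms(2) by (auto simp: elh_def)
  have hh: "h holomorphic_on UNIV" using assms(3) by (auto simp: elh_def)
  have fe: "\<And>z. f (g z) = f (h z)" using assms(4) by (metis comp_apply)
  have nz: "g z - h z \<noteq> 0" for z
  proof
    assume "g z - h z = 0"
    hence eq: "g z = h z" by simp
    obtain r where r: "r > 0" "inj_on f (ball (g z) r)"
      using has_complex_derivative_locally_injective[OF hf(1) _ _ hf(2)] by blast
    define S where "S = g -` ball (g z) r \<inter> h -` ball (g z) r"
    have cg: "continuous_on UNIV g" using hg holomorphic_on_imp_continuous_on by blast
    have ch: "continuous_on UNIV h" using hh holomorphic_on_imp_continuous_on by blast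
    have oS: "open S" unfolding S_def
      using open_vimage[OF _ cg] open_vimage[OF _ ch] by blast
    have zS: "z \<in> S" unfolding S_def using r(1) eq by auto
    have onS: "\<And>w. w \<in> S \<Longrightarrow> g w = h w"
      using r(2) fe unfolding S_def inj_on_def by blast
    have "\<And>w. g w = h w"
      by (rule analytic_continuation_open[OF oS open_UNIV _ connected_UNIV _ hg hh onS]) (use zS in auto)
    thus False using assms(5) by auto
  qed
  have "(\<lambda>z. g z - h z) holomorphic_on UNIV" using hg hh by (intro holomorphic_intros)
  then obtain t where t: "t holomorphic_on UNIV" "\<And>x. exp (t x) = g x - h x"
    using holomorphic_logarithm_exists[of UNIV "\<lambda>z. g z - h z" 0] nz by auto
  show ?thesis using t by (intro exI[of _ t]) auto
qed

end
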